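(* Let $n$ be a positive integer and suppose $c_n<1$. Then for every profinite group $G$ such that $X_n(G)=\{x\in G : x^n=1\}$ has positive Haar measure, there exist an open subgroup $H$ of $G$ and an element $t\in G$ such that every element of the coset $tH$ has order dividing $n$.
   Context: Haar measure means normalized Haar measure. For a group $K$ and an automorphism $\phi$ of $K$ whose order divides $n$, writing $x^\phi$ for the image of $x$, set $X_{n,\phi}(K):=\{x\in K : x x^{\phi} x^{\phi^2}\cdots x^{\phi^{n-1}}=1\}$. Define $$c_n:=\sup\left(\left\{\frac{|X_{n,\phi}(H)|}{|H|} : H \text{ a finite group},\ \phi\in \mathrm{Aut}(H),\ \phi^n=\mathrm{id}\right\}\setminus\{1\}\right).$$ *)

theory Defs
  imports "HOL-Analysis.Analysis" "HOL-Probability.Probability" "HOL-Algebra.Algebra"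
begin

definition borel_of :: "'a topology \<Rightarrow> 'a measure" where
  "borel_of T = sigma (topspace T) {U. openin T U}"

definition topological_group :: "('a, 'b) monoid_scheme \<Rightarrow> 'a topology \<Rightarrow> bool" where
  "topological_group G T \<longleftrightarrow> group G \<and> topspace T = carrier G \<and>
     continuous_map (prod_topology T T) T (\<lambda>(x, y). x \<otimes>\<^bsub>G\<^esub> y) \<and>
     continuous_map T T (\<lambda>x. inv\<^bsub>G\<^esub> x)"

definition profinite_group :: "('a, 'b) monoid_scheme \<Rightarrow> 'a topology \<Rightarrow> bool" where
  "profinite_group G T \<longleftrightarrow> topological_group G T \<and> compact_space T \<and> Hausdorff_space T \<and>
     (\<forall>x\<in>topspace T. connected_component_of_set T x = {x})"

definition haar_measure :: "('a, 'b) monoid_scheme \<Rightarrow> 'a topology \<Rightarrow> 'a measure \<Rightarrow> bool" where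
  "haar_measure G T \<mu> \<longleftrightarrow> prob_space \<mu> \<and> space \<mu> = carrier G \<and> sets \<mu> = sets (borel_of T) \<and>
     (\<forall>g\<in>carrier G. \<forall>A\<in>sets \<mu>. emeasure \<mu> ((\<lambda>x. g \<otimes>\<^bsub>G\<^esub> x) ` A) = emeasure \<mu> A) \<and>
     (\<forall>A\<in>sets \<mu>. emeasure \<mu> A = (INF U\<in>{U. openin T U \<and> A \<subseteq> U}. emeasure \<mu> U)) \<and>
     (\<forall>U. openin T U \<longrightarrow> emeasure \<mu> U = (SUP K\<in>{K. compactin T K \<and> K \<subseteq> U}. emeasure \<mu> K))"

definition twisted_prod :: "('a, 'b) monoid_scheme \<Rightarrow> ('a \<Rightarrow> 'a) \<Rightarrow> nat \<Rightarrow> 'a \<Rightarrow> 'a" where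
  "twisted_prod H \<phi> n x = foldr (\<lambda>i acc. (\<phi> ^^ i) x \<otimes>\<^bsub>H\<^esub> acc) [0..<n] \<one>\<^bsub>H\<^esub>"

definition X_twisted :: "('a, 'b) monoid_scheme \<Rightarrow> ('a \<Rightarrow> 'a) \<Rightarrow> nat \<Rightarrow> 'a set" where
  "X_twisted H \<phi> n = {x \<in> carrier H. twisted_prod H \<phi> n x = \<one>\<^bsub>H\<^esub>}"

text \<open>c_n: finite groups are taken up to isomorphism, represented with carriers in nat.\<close>
definition c_const :: "nat \<Rightarrow> real" where
  "c_const n = Sup ({real (card (X_twisted H \<phi> n)) / real (card (carrier H)) | (H :: nat monoid) \<phi>.
       group H \<and> finite (carrier H) \<and> \<phi> \<in> iso H H \<and> (\<forall>x\<in>carrier H. (\<phi> ^^ n) x = x)} - {1})"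

end

theory Submission
  imports Defs
begin

locale pgrp = group G for G :: "('a, 'b) monoid_scheme" (structure) +
  fixes T :: "'a topology"
  assumes pg: "profinite_group G T"
begin

lemma top: "topspace T = carrier G"
  using pg by (simp add: profinite_group_def topological_group_def)

lemma mcont: "continuous_map (prod_topology T T) T (\<lambda>(x, y). x \<otimes> y)"
  using pg by (simp add: profinite_group_def topological_group_def)

lemma icont: "continuous_map T T (\<lambda>x. inv x)"
  using pg by (simp add: profinite_group_def topological_group_def)

lemma cpt: "compact_space T"
  using pg by (simp add: profinite_group_def)

lemma haus: "Hausdorff_space T"
  using pg by (simp add: profinite_group_def)

lemma tdisc: "x \<in> carrier G \<Longrightarrow> connected_component_of_set T x = {x}"
  using pg top by (simp add: profinite_group_def)

lemma cont_mult:
  assumes "continuous_map T T f" "continuous_map T T g"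
  shows "continuous_map T T (\<lambda>x. f x \<otimes> g x)"
proof -
  have "continuous_map T T ((\<lambda>(x, y). x \<otimes> y) \<circ> (\<lambda>x. (f x, g x)))"
    by (rule continuous_map_compose[OF continuous_map_pairedI[OF assms] mcont])
  then show ?thesis by (simp add: o_def)
qed

lemma cont_const: "c \<in> carrier G \<Longrightarrow> continuous_map T T (\<lambda>x. c)"
  by (simp add: top)

lemma cont_id: "continuous_map T T (\<lambda>x. x)"
  by (simp add: continuous_map_id[unfolded id_def])

lemma cont_pow: "continuous_map T T (\<lambda>x. x [^] (k::nat))"
proof (induction k)
  case 0
  then show ?case by (simp add: top)
next
  case (Suc k)
  then show ?case by (simp add: cont_mult cont_id)
qed

lemma cont_lmult: "g \<in> carrier G \<Longrightarrow> continuous_map T T (\<lambda>x. g \<otimes> x)"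
  using cont_mult[OF cont_const[of g] cont_id] by simp

lemma cont_conj: "g \<in> carrier G \<Longrightarrow> continuous_map T T (\<lambda>x. g \<otimes> x \<otimes> inv g)"
  using cont_mult[OF cont_mult[OF cont_const[of g] cont_id] cont_const[of "inv g"]] by simp

lemma open_pre: "continuous_map T T f \<Longrightarrow> openin T U \<Longrightarrow> openin T {x \<in> carrier G. f x \<in> U}"
  using openin_continuous_map_preimage top by metis

lemma closed_pre: "continuous_map T T f \<Longrightarrow> closedin T U \<Longrightarrow> closedin T {x \<in> carrier G. f x \<in> U}"
  using closedin_continuous_map_preimage top by metis

lemma open_sub: "openin T U \<Longrightarrow> U \<subseteq> carrier G"
  using openin_subset top by metis

lemma open_lcos:
  assumes "openin T U" "g \<in> carrier G"
  shows "openin T (g <# U)"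
proof -
  have U: "U \<subseteq> carrier G" using open_sub assms by auto
  have "g <# U = {x \<in> carrier G. inv g \<otimes> x \<in> U}"
  proof (intro equalityI subsetI)
    fix x assume "x \<in> g <# U"
    then obtain u where u: "u \<in> U" "x = g \<otimes> u" by (auto simp: l_coset_def)
    then show "x \<in> {x \<in> carrier G. inv g \<otimes> x \<in> U}"
      using U assms(2) by (auto simp: m_assoc[symmetric])
  next
    fix x assume x: "x \<in> {x \<in> carrier G. inv g \<otimes> x \<in> U}"
    then have "x = g \<otimes> (inv g \<otimes> x)" using assms(2) by (simp add: m_assoc[symmetric])
    then show "x \<in> g <# U" using x by (auto simp: l_coset_def)
  qed
  then show ?thesis
    using open_pre[OF cont_lmult[of "inv g"] assms(1)] assms(2) by simp
qed

lemma open_rcos: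
  assumes "openin T U" "g \<in> carrier G"
  shows "openin T (U #> g)"
proof -
  have U: "U \<subseteq> carrier G" using open_sub assms by auto
  have "U #> g = {x \<in> carrier G. x \<otimes> inv g \<in> U}"
  proof (intro equalityI subsetI)
    fix x assume "x \<in> U #> g"
    then obtain u where u: "u \<in> U" "x = u \<otimes> g" by (auto simp: r_coset_def)
    then show "x \<in> {x \<in> carrier G. x \<otimes> inv g \<in> U}"
      using U assms(2) by (auto simp: m_assoc)
  next
    fix x assume x: "x \<in> {x \<in> carrier G. x \<otimes> inv g \<in> U}"
    then have "x = (x \<otimes> inv g) \<otimes> g" using assms(2) by (simp add: m_assoc)
    then show "x \<in> U #> g" using x by (auto simp: r_coset_def)
  qed
  then show ?thesis
    using open_pre[OF cont_mult[OF cont_id cont_const[of "inv g"]] assms(1)] assms(2) by simp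
qed

lemma closed_sing: "x \<in> carrier G \<Longrightarrow> closedin T {x}"
  using Hausdorff_imp_t1_space[OF haus] t1_space_closedin_singleton top by metis

lemma clopen_nbhd:
  assumes "openin T V" "\<one> \<in> V"
  shows "\<exists>K. openin T K \<and> closedin T K \<and> \<one> \<in> K \<and> K \<subseteq> V"
proof -
  have C: "{\<one>} \<in> connected_components_of T"
    unfolding connected_components_of_def using tdisc[of \<one>] top by force
  have "separated_between T {\<one>} (topspace T - V)"
  proof (rule separated_between_compact_connected_component[OF compact_imp_locally_compact_space[OF cpt] haus C])
    show "compactin T {\<one>}" using top by simp
    show "closedin T (topspace T - V)" using assms(1) by blast
    show "disjnt {\<one>} (topspace T - V)" using assms(2) by simp
  qed
  then obtain U W where UW: "openin T U" "openin T W" "U \<union> W = topspace T" "disjnt U W"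
      "{\<one>} \<subseteq> U" "topspace T - V \<subseteq> W"
    unfolding separated_between_def by blast
  have "U = topspace T - W" using UW(3,4) by (auto simp: disjnt_def)
  then have "closedin T U" using UW(2) by auto
  moreover have "U \<subseteq> V" using UW by (auto simp: disjnt_def)
  ultimately show ?thesis using UW by blast
qed


lemma inv_cancel1 [simp]: "x \<in> carrier G \<Longrightarrow> y \<in> carrier G \<Longrightarrow> x \<otimes> (inv x \<otimes> y) = y"
  by (simp add: m_assoc[symmetric])

lemma inv_cancel2 [simp]: "x \<in> carrier G \<Longrightarrow> y \<in> carrier G \<Longrightarrow> inv x \<otimes> (x \<otimes> y) = y"
  by (simp add: m_assoc[symmetric])

end

context pgrp begin

end

context pgrp begin
lemma open_carrier: "openin T (carrier G)"
  using openin_topspace[of T] top by simp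

end

context pgrp begin
lemma lcos_mem: "subgroup H G \<Longrightarrow> x \<in> carrier G \<Longrightarrow> x \<in> x <# H"
proof -
  assume a: "subgroup H G" "x \<in> carrier G"
  have "x \<otimes> \<one> \<in> x <# H" using subgroup.one_closed[OF a(1)] by (auto simp: l_coset_def)
  then show ?thesis using a by simp
qed

end

context pgrp begin
lemma compact_cover_finite:
  assumes "compactin T K" "\<And>x. x \<in> K \<Longrightarrow> openin T (Op x) \<and> x \<in> Op x"
  shows "\<exists>F. finite F \<and> F \<subseteq> K \<and> K \<subseteq> \<Union>(Op ` F)"
proof -
  have o: "\<forall>B\<in>Op ` K. openin T B" using assms(2) by auto
  have c: "K \<subseteq> \<Union>(Op ` K)" using assms(2) by auto
  obtain FF where FF: "finite FF" "FF \<subseteq> Op ` K" "K \<subseteq> \<Union>FF"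
    using assms(1) o c unfolding compactin_def by blast
  obtain F where F: "F \<subseteq> K" "finite F" "FF = Op ` F"
    using finite_subset_image[OF FF(1,2)] by blast
  show ?thesis using F FF by blast
qed


end

context pgrp begin
lemma open_subgroup_in:
  assumes "openin T V" "\<one> \<in> V"
  shows "\<exists>H. subgroup H G \<and> openin T H \<and> H \<subseteq> V"
proof -
  obtain K where K: "openin T K" "closedin T K" "\<one> \<in> K" "K \<subseteq> V"
    using clopen_nbhd[OF assms] by blast
  have Kc: "K \<subseteq> carrier G" using open_sub K by auto
  have Kcpt: "compactin T K" using closedin_compact_space[OF cpt K(2)] .
  define P where "P = {p \<in> topspace (prod_topology T T). (\<lambda>(x, y). x \<otimes> y) p \<in> K}"
  have Po: "openin (prod_topology T T) P"
    unfolding P_def by (rule openin_continuous_map_preimage[OF mcont K(1)])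
  have "\<forall>x\<in>K. \<exists>A B. openin T A \<and> openin T B \<and> x \<in> A \<and> \<one> \<in> B \<and> A \<times> B \<subseteq> P"
  proof
    fix x assume x: "x \<in> K"
    then have "(x, \<one>) \<in> P" using Kc by (auto simp: P_def top)
    then show "\<exists>A B. openin T A \<and> openin T B \<and> x \<in> A \<and> \<one> \<in> B \<and> A \<times> B \<subseteq> P"
      using Po unfolding openin_prod_topology_alt by blast
  qed
  then have "\<forall>x\<in>K. \<exists>p. openin T (fst p) \<and> openin T (snd p) \<and> x \<in> fst p \<and> \<one> \<in> snd p \<and> fst p \<times> snd p \<subseteq> P"
    by simp
  then obtain p where p: "\<forall>x\<in>K. openin T (fst (p x)) \<and> openin T (snd (p x)) \<and> x \<in> fst (p x) \<and> \<one> \<in> snd (p x) \<and> fst (p x) \<times> snd (p x) \<subseteq> P"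
    by (rule bchoice[THEN exE]) blast
  define A where "A = (\<lambda>x. fst (p x))"
  define B where "B = (\<lambda>x. snd (p x))"
  have AB: "\<And>x. x \<in> K \<Longrightarrow> openin T (A x) \<and> openin T (B x) \<and> x \<in> A x \<and> \<one> \<in> B x \<and> A x \<times> B x \<subseteq> P"
    using p unfolding A_def B_def by blast
  obtain F where F: "finite F" "F \<subseteq> K" "K \<subseteq> \<Union>(A ` F)"
    using compact_cover_finite[OF Kcpt, of A] AB by blast
  define B0 where "B0 = \<Inter>(insert (carrier G) (B ` F))"
  have B0o: "openin T B0"
    unfolding B0_def using F AB open_carrier by (intro openin_Inter) auto
  have B0c: "B0 \<subseteq> carrier G" unfolding B0_def by auto
  have oneB0: "\<one> \<in> B0" unfolding B0_def using F AB by auto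
  define W where "W = {x \<in> carrier G. x \<in> B0 \<and> inv x \<in> B0}"
  have Wo: "openin T W"
  proof -
    have "W = B0 \<inter> {x \<in> carrier G. inv x \<in> B0}" unfolding W_def using B0c by auto
    then show ?thesis using open_pre[OF icont B0o] B0o by auto
  qed
  have oneW: "\<one> \<in> W" unfolding W_def using oneB0 by auto
  have Winv: "\<And>w. w \<in> W \<Longrightarrow> inv w \<in> W" unfolding W_def by auto
  have KW: "\<And>k w. k \<in> K \<Longrightarrow> w \<in> W \<Longrightarrow> k \<otimes> w \<in> K"
  proof -
    fix k w assume k: "k \<in> K" and w: "w \<in> W"
    then obtain x where x: "x \<in> F" "k \<in> A x" using F by auto
    then have "w \<in> B x" using w unfolding W_def B0_def by auto
    then have "(k, w) \<in> P" using AB[of x] x F k by auto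
    then show "k \<otimes> w \<in> K" unfolding P_def by auto
  qed
  define S where "S = {h \<in> carrier G. (\<forall>k\<in>K. k \<otimes> h \<in> K) \<and> (\<forall>k\<in>K. k \<otimes> inv h \<in> K)}"
  have SK: "S \<subseteq> K"
  proof
    fix h assume "h \<in> S"
    then have "\<one> \<otimes> h \<in> K" "h \<in> carrier G" using K(3) unfolding S_def by auto
    then show "h \<in> K" by simp
  qed
  have subS: "subgroup S G"
  proof (rule subgroupI)
    show "S \<subseteq> carrier G" unfolding S_def by auto
    show "S \<noteq> {}"
    proof -
      have "\<one> \<in> S" unfolding S_def using Kc by auto
      then show ?thesis by auto
    qed
    fix a assume a: "a \<in> S"
    then show "inv a \<in> S" unfolding S_def by auto
  next
    fix a b assume a: "a \<in> S" and b: "b \<in> S"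
    have ac: "a \<in> carrier G" and bc: "b \<in> carrier G" using a b unfolding S_def by auto
    have "\<forall>k\<in>K. k \<otimes> (a \<otimes> b) \<in> K"
    proof
      fix k assume "k \<in> K"
      then have "k \<otimes> a \<in> K" using a unfolding S_def by auto
      then have "(k \<otimes> a) \<otimes> b \<in> K" using b unfolding S_def by auto
      then show "k \<otimes> (a \<otimes> b) \<in> K" using subsetD[OF Kc \<open>k \<in> K\<close>] ac bc by (simp add: m_assoc)
    qed
    moreover have "\<forall>k\<in>K. k \<otimes> inv (a \<otimes> b) \<in> K"
    proof
      fix k assume "k \<in> K"
      then have "k \<otimes> inv b \<in> K" using b unfolding S_def by auto
      then have "(k \<otimes> inv b) \<otimes> inv a \<in> K" using a unfolding S_def by auto
      then show "k \<otimes> inv (a \<otimes> b) \<in> K" using subsetD[OF Kc \<open>k \<in> K\<close>] ac bc by (simp add: m_assoc inv_mult_group)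
    qed
    ultimately show "a \<otimes> b \<in> S" unfolding S_def using ac bc by auto
  qed
  have So: "openin T S"
  proof (subst openin_subopen, intro ballI)
    fix h assume h: "h \<in> S"
    have hc: "h \<in> carrier G" using h unfolding S_def by auto
    have "h <# W \<subseteq> S"
    proof
      fix z assume "z \<in> h <# W"
      then obtain w where w: "w \<in> W" "z = h \<otimes> w" by (auto simp: l_coset_def)
      have wc: "w \<in> carrier G" using w unfolding W_def by auto
      have "\<forall>k\<in>K. k \<otimes> (h \<otimes> w) \<in> K"
      proof
        fix k assume k: "k \<in> K"
        then have "k \<otimes> h \<in> K" using h unfolding S_def by auto
        then have "(k \<otimes> h) \<otimes> w \<in> K" using KW w by auto
        then show "k \<otimes> (h \<otimes> w) \<in> K" using subsetD[OF Kc k] hc wc by (simp add: m_assoc)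
      qed
      moreover have "\<forall>k\<in>K. k \<otimes> inv (h \<otimes> w) \<in> K"
      proof
        fix k assume k: "k \<in> K"
        then have "k \<otimes> inv w \<in> K" using KW Winv w by auto
        then have "(k \<otimes> inv w) \<otimes> inv h \<in> K" using h unfolding S_def by auto
        then show "k \<otimes> inv (h \<otimes> w) \<in> K" using subsetD[OF Kc k] hc wc by (simp add: m_assoc inv_mult_group)
      qed
      ultimately show "z \<in> S" unfolding S_def using w hc wc by auto
    qed
    moreover have "h \<in> h <# W" using oneW hc by (force simp: l_coset_def)
    ultimately show "\<exists>U. openin T U \<and> h \<in> U \<and> U \<subseteq> S"
      using open_lcos[OF Wo hc] by blast
  qed
  show ?thesis using subS So SK K(4) by blast
qed

end

context pgrp begin
lemma open_normal_in:
  assumes "openin T V" "\<one> \<in> V"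
  shows "\<exists>N. N \<lhd> G \<and> openin T N \<and> N \<subseteq> V"
proof -
  obtain H where H: "subgroup H G" "openin T H" "H \<subseteq> V"
    using open_subgroup_in[OF assms] by blast
  interpret H: subgroup H G by (rule H(1))
  have cc: "compactin T (carrier G)" using cpt top by (simp add: compact_space_def)
  have "\<And>g. g \<in> carrier G \<Longrightarrow> openin T (g <# H) \<and> g \<in> g <# H"
    using open_lcos[OF H(2)] lcos_mem[OF H(1)] by blast
  then obtain F0 where F0: "finite F0" "F0 \<subseteq> carrier G" "carrier G \<subseteq> \<Union>((\<lambda>g. g <# H) ` F0)"
    using compact_cover_finite[OF cc, of "\<lambda>g. g <# H"] by blast
  define F where "F = insert \<one> F0"
  have F: "finite F" "F \<subseteq> carrier G" "carrier G \<subseteq> \<Union>((\<lambda>g. g <# H) ` F)" "\<one> \<in> F"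
    using F0 unfolding F_def by auto
  define N where "N = {x \<in> carrier G. \<forall>f\<in>F. inv f \<otimes> x \<otimes> f \<in> H}"
  have Neq: "N = \<Inter>(insert (carrier G) ((\<lambda>f. {x \<in> carrier G. inv f \<otimes> x \<otimes> f \<in> H}) ` F))"
    unfolding N_def by auto
  have op: "openin T {x \<in> carrier G. inv f \<otimes> x \<otimes> f \<in> H}" if f: "f \<in> F" for f
  proof -
    have fc: "f \<in> carrier G" using f F by auto
    show ?thesis using open_pre[OF cont_conj[of "inv f"] H(2)] fc by simp
  qed
  have No: "openin T N"
    unfolding Neq using F open_carrier op
    by (intro openin_Inter) auto
  have NH: "N \<subseteq> H"
  proof
    fix x assume "x \<in> N"
    then have "inv \<one> \<otimes> x \<otimes> \<one> \<in> H" "x \<in> carrier G" using F(4) unfolding N_def by auto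
    then show "x \<in> H" by simp
  qed
  have subN: "subgroup N G"
  proof (rule subgroupI)
    show "N \<subseteq> carrier G" unfolding N_def by auto
    have "\<one> \<in> N" unfolding N_def using F(2) by auto
    then show "N \<noteq> {}" by auto
  next
    fix a assume a: "a \<in> N"
    have ac: "a \<in> carrier G" using a unfolding N_def by auto
    have "\<forall>f\<in>F. inv f \<otimes> inv a \<otimes> f \<in> H"
    proof
      fix f assume f: "f \<in> F"
      then have fc: "f \<in> carrier G" using F by auto
      have "inv f \<otimes> a \<otimes> f \<in> H" using a f unfolding N_def by auto
      then have "inv (inv f \<otimes> a \<otimes> f) \<in> H" by auto
      also have "inv (inv f \<otimes> a \<otimes> f) = inv f \<otimes> inv a \<otimes> f"
        using fc ac by (simp add: inv_mult_group m_assoc)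
      finally show "inv f \<otimes> inv a \<otimes> f \<in> H" .
    qed
    then show "inv a \<in> N" unfolding N_def using ac by auto
  next
    fix a b assume a: "a \<in> N" and b: "b \<in> N"
    have ac: "a \<in> carrier G" and bc: "b \<in> carrier G" using a b unfolding N_def by auto
    have "\<forall>f\<in>F. inv f \<otimes> (a \<otimes> b) \<otimes> f \<in> H"
    proof
      fix f assume f: "f \<in> F"
      then have fc: "f \<in> carrier G" using F by auto
      have "(inv f \<otimes> a \<otimes> f) \<otimes> (inv f \<otimes> b \<otimes> f) \<in> H" using a b f unfolding N_def by auto
      also have "(inv f \<otimes> a \<otimes> f) \<otimes> (inv f \<otimes> b \<otimes> f) = inv f \<otimes> (a \<otimes> b) \<otimes> f"
        using fc ac bc by (simp add: m_assoc r_inv_ex)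
      finally show "inv f \<otimes> (a \<otimes> b) \<otimes> f \<in> H" .
    qed
    then show "a \<otimes> b \<in> N" unfolding N_def using ac bc by auto
  qed
  have "N \<lhd> G"
  proof (subst normal_inv_iff, intro conjI subN ballI)
    fix x h assume x: "x \<in> carrier G" and h: "h \<in> N"
    have hc: "h \<in> carrier G" using h unfolding N_def by auto
    have "\<forall>f\<in>F. inv f \<otimes> (x \<otimes> h \<otimes> inv x) \<otimes> f \<in> H"
    proof
      fix f assume f: "f \<in> F"
      then have fc: "f \<in> carrier G" using F by auto
      have "inv x \<otimes> f \<in> carrier G" using x fc by auto
      then obtain f' where f': "f' \<in> F" "inv x \<otimes> f \<in> f' <# H" using F(3) by auto
      then obtain h0 where h0: "h0 \<in> H" "inv x \<otimes> f = f' \<otimes> h0" by (auto simp: l_coset_def)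
      have f'c: "f' \<in> carrier G" using f' F by auto
      have h0c: "h0 \<in> carrier G" using h0 by auto
      have "inv h0 \<otimes> (inv f' \<otimes> h \<otimes> f') \<otimes> h0 \<in> H" using h f' h0 unfolding N_def by auto
      also have "inv h0 \<otimes> (inv f' \<otimes> h \<otimes> f') \<otimes> h0 = inv (f' \<otimes> h0) \<otimes> h \<otimes> (f' \<otimes> h0)"
        using f'c h0c hc by (simp add: m_assoc inv_mult_group)
      also have "\<dots> = inv (inv x \<otimes> f) \<otimes> h \<otimes> (inv x \<otimes> f)" using h0 by simp
      also have "\<dots> = inv f \<otimes> (x \<otimes> h \<otimes> inv x) \<otimes> f"
        using x fc hc by (simp add: m_assoc inv_mult_group)
      finally show "inv f \<otimes> (x \<otimes> h \<otimes> inv x) \<otimes> f \<in> H" .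
    qed
    then show "x \<otimes> h \<otimes> inv x \<in> N" unfolding N_def using x hc by auto
  qed
  then show ?thesis using No NH H(3) by blast
qed

end

context pgrp begin
lemma sep_point:
  assumes "g \<in> carrier G" "g \<noteq> \<one>"
  shows "\<exists>N. N \<lhd> G \<and> openin T N \<and> g \<notin> N"
proof -
  have "openin T (carrier G - {g})"
    using closed_sing[OF assms(1)] top unfolding closedin_def by simp
  then show ?thesis using open_normal_in[of "carrier G - {g}"] assms by auto
qed

end

context pgrp begin
lemma normal_Int2: "A \<lhd> G \<Longrightarrow> B \<lhd> G \<Longrightarrow> A \<inter> B \<lhd> G"
  by (simp add: normal_inv_iff subgroups_Inter_pair)

end

context pgrp begin
lemma normal_Inter_fin:
  assumes "finite F" "\<And>N. N \<in> F \<Longrightarrow> N \<lhd> G"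
  shows "\<Inter>(insert (carrier G) F) \<lhd> G"
  using assms
proof (induction F rule: finite_induct)
  case empty
  then show ?case using normal_inv_iff subgroup_self by auto
next
  case (insert x F)
  have "\<Inter>(insert (carrier G) (insert x F)) = x \<inter> \<Inter>(insert (carrier G) F)" by auto
  then show ?case using insert normal_Int2 by auto
qed

end

context pgrp begin
lemma compact_nbhd:
  assumes "compactin T KX" "openin T U" "KX \<subseteq> U"
  shows "\<exists>N. N \<lhd> G \<and> openin T N \<and> (\<forall>x\<in>KX. x <# N \<subseteq> U)"
proof -
  have Xc: "KX \<subseteq> carrier G" using assms(2,3) open_sub by auto
  have "\<forall>x\<in>KX. \<exists>N. N \<lhd> G \<and> openin T N \<and> N \<subseteq> {y \<in> carrier G. x \<otimes> y \<in> U}"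
  proof
    fix x assume x: "x \<in> KX"
    have xc: "x \<in> carrier G" using x Xc by auto
    have 1: "openin T {y \<in> carrier G. x \<otimes> y \<in> U}"
      by (rule open_pre[OF cont_lmult[OF xc] assms(2)])
    have 2: "\<one> \<in> {y \<in> carrier G. x \<otimes> y \<in> U}" using x xc assms(3) by auto
    show "\<exists>N. N \<lhd> G \<and> openin T N \<and> N \<subseteq> {y \<in> carrier G. x \<otimes> y \<in> U}"
      by (rule open_normal_in[OF 1 2])
  qed
  then obtain NN where NN0: "\<forall>x\<in>KX. NN x \<lhd> G \<and> openin T (NN x) \<and> NN x \<subseteq> {y \<in> carrier G. x \<otimes> y \<in> U}"
    by (rule bchoice[THEN exE]) blast
  then have NN: "\<And>x. x \<in> KX \<Longrightarrow> NN x \<lhd> G \<and> openin T (NN x) \<and> NN x \<subseteq> {y \<in> carrier G. x \<otimes> y \<in> U}"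
    by blast
  have "\<And>x. x \<in> KX \<Longrightarrow> openin T (x <# NN x) \<and> x \<in> x <# NN x"
  proof -
    fix x assume x: "x \<in> KX"
    then have "subgroup (NN x) G" using NN[OF x] normal_imp_subgroup by blast
    then show "openin T (x <# NN x) \<and> x \<in> x <# NN x"
      using open_lcos[of "NN x" x] NN[OF x] x Xc lcos_mem[of "NN x" x] by blast
  qed
  then obtain F where F: "finite F" "F \<subseteq> KX" "KX \<subseteq> \<Union>((\<lambda>x. x <# NN x) ` F)"
    using compact_cover_finite[OF assms(1), of "\<lambda>x. x <# NN x"] by blast
  define N where "N = \<Inter>(insert (carrier G) (NN ` F))"
  have Nn: "N \<lhd> G" unfolding N_def using F NN by (intro normal_Inter_fin) auto
  have No: "openin T N" unfolding N_def using F NN open_carrier by (intro openin_Inter) auto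
  have "\<forall>x\<in>KX. x <# N \<subseteq> U"
  proof (intro ballI subsetI)
    fix x z assume x: "x \<in> KX" and z: "z \<in> x <# N"
    obtain f where f: "f \<in> F" "x \<in> f <# NN f" using F(3) x by blast
    then obtain a where a: "a \<in> NN f" "x = f \<otimes> a" by (auto simp: l_coset_def)
    obtain b where b: "b \<in> N" "z = x \<otimes> b" using z by (auto simp: l_coset_def)
    have fX: "f \<in> KX" using f F by auto
    have sub: "subgroup (NN f) G" using NN[OF fX] normal_imp_subgroup by blast
    have bN: "b \<in> NN f" using b(1) f(1) unfolding N_def by blast
    have fc: "f \<in> carrier G" using fX Xc by blast
    have ac: "a \<in> carrier G" "b \<in> carrier G" using subgroup.mem_carrier[OF sub] a(1) bN by auto
    have ab: "a \<otimes> b \<in> NN f" using subgroup.m_closed[OF sub a(1) bN] .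
    have "NN f \<subseteq> {y \<in> carrier G. f \<otimes> y \<in> U}" using NN[OF fX] by blast
    then have "f \<otimes> (a \<otimes> b) \<in> U" using ab by blast
    moreover have "z = f \<otimes> (a \<otimes> b)" using a(2) b(2) fc ac by (simp add: m_assoc)
    ultimately show "z \<in> U" by simp
  qed
  then show ?thesis using Nn No by blast
qed

end

context pgrp begin
lemma finite_rcosets:
  assumes "subgroup H G" "openin T H"
  shows "finite (rcosets H)"
proof -
  have cc: "compactin T (carrier G)" using cpt top by (simp add: compact_space_def)
  have o: "\<forall>B\<in>rcosets H. openin T B"
    using open_rcos[OF assms(2)] unfolding RCOSETS_def by blast
  have c: "carrier G \<subseteq> \<Union>(rcosets H)" using rcosets_part_G[OF assms(1)] by simp
  obtain F where F: "finite F" "F \<subseteq> rcosets H" "carrier G \<subseteq> \<Union>F"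
    using cc o c unfolding compactin_def by blast
  have "rcosets H \<subseteq> F"
  proof
    fix C assume C: "C \<in> rcosets H"
    then obtain g where g: "g \<in> carrier G" "C = H #> g" unfolding RCOSETS_def by auto
    then have "g \<in> C" using assms(1) by (simp add: rcos_self)
    then obtain D where D: "D \<in> F" "g \<in> D" using F g by auto
    have "D \<in> rcosets H" using D F by auto
    then have "C = D"
      using rcos_disjoint[OF assms(1)] C D \<open>g \<in> C\<close> unfolding pairwise_def disjnt_def by blast
    then show "C \<in> F" using D by simp
  qed
  then show ?thesis using F finite_subset by blast
qed


end

locale hgrp = pgrp G T for G :: "('a, 'b) monoid_scheme" (structure) and T +
  fixes \<mu> :: "'a measure"
  assumes hm: "haar_measure G T \<mu>"
begin

lemma prob: "prob_space \<mu>" using hm by (simp add: haar_measure_def)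

lemma fin: "finite_measure \<mu>" using prob by (simp add: prob_space_def)

lemma spc: "space \<mu> = carrier G" using hm by (simp add: haar_measure_def)

lemma sets_eq: "sets \<mu> = sigma_sets (carrier G) {U. openin T U}"
proof -
  have "sets \<mu> = sets (borel_of T)" using hm by (simp add: haar_measure_def)
  also have "\<dots> = sigma_sets (topspace T) {U. openin T U}"
    unfolding borel_of_def by (rule sets_measure_of) (auto dest: openin_subset)
  finally show ?thesis using top by simp
qed

lemma sets_open: "openin T U \<Longrightarrow> U \<in> sets \<mu>"
  unfolding sets_eq by (rule sigma_sets.Basic) simp

lemma sets_closed: "closedin T C \<Longrightarrow> C \<in> sets \<mu>"
proof -
  assume c: "closedin T C"
  then have "openin T (topspace T - C)" by (simp add: closedin_def)
  then have "space \<mu> - (topspace T - C) \<in> sets \<mu>" using sets_open sets.compl_sets by blast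
  moreover have "C \<subseteq> carrier G" using closedin_subset[OF c] top by simp
  then have "space \<mu> - (topspace T - C) = C" using spc top by auto
  ultimately show ?thesis by simp
qed

lemma emeas_lcos: "g \<in> carrier G \<Longrightarrow> A \<in> sets \<mu> \<Longrightarrow> emeasure \<mu> (g <# A) = emeasure \<mu> A"
proof -
  assume g: "g \<in> carrier G" and A: "A \<in> sets \<mu>"
  have "g <# A = (\<lambda>x. g \<otimes> x) ` A" by (auto simp: l_coset_def)
  then show ?thesis using hm g A by (simp add: haar_measure_def)
qed

lemma meas_lcos: "g \<in> carrier G \<Longrightarrow> A \<in> sets \<mu> \<Longrightarrow> measure \<mu> (g <# A) = measure \<mu> A"
  using emeas_lcos by (simp add: measure_def)

lemma outer_reg: "A \<in> sets \<mu> \<Longrightarrow> emeasure \<mu> A = (INF U\<in>{U. openin T U \<and> A \<subseteq> U}. emeasure \<mu> U)"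
  using hm by (simp add: haar_measure_def)

lemma normal_coset_meas:
  assumes "N \<lhd> G" "openin T N" "C \<in> rcosets N"
  shows "C \<in> sets \<mu> \<and> measure \<mu> C = measure \<mu> N \<and> (\<exists>g\<in>carrier G. C = g <# N)"
proof -
  obtain g where g: "g \<in> carrier G" "C = N #> g" using assms(3) unfolding RCOSETS_def by auto
  have "C = g <# N" using g normal.coset_eq[OF assms(1)] by auto
  moreover have "measure \<mu> (g <# N) = measure \<mu> N" using meas_lcos[OF g(1) sets_open[OF assms(2)]] .
  moreover have "C \<in> sets \<mu>" using g open_rcos[OF assms(2)] sets_open by auto
  ultimately show ?thesis using g by auto
qed

lemma stepA:
  assumes c: "0 \<le> c" "c < 1" and XX: "closedin T XX" "measure \<mu> XX > 0"
  shows "\<exists>N t. N \<lhd> G \<and> openin T N \<and> t \<in> carrier G \<and> measure \<mu> (XX \<inter> (t <# N)) > c * measure \<mu> N"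
proof (rule ccontr)
  assume H: "\<not> ?thesis"
  define d where "d = (c + 1) / 2"
  have d: "0 < d" "c \<le> d" "d < 1" using c unfolding d_def by auto
  have Xs: "XX \<in> sets \<mu>" using sets_closed[OF XX(1)] .
  have "measure \<mu> XX < measure \<mu> XX / d" using XX(2) d by (simp add: less_divide_eq)
  then have "emeasure \<mu> XX < ennreal (measure \<mu> XX / d)"
    using finite_measure.emeasure_eq_measure[OF fin] XX(2) d
    by (metis ennreal_lessI divide_pos_pos)
  then have "(INF U\<in>{U. openin T U \<and> XX \<subseteq> U}. emeasure \<mu> U) < ennreal (measure \<mu> XX / d)"
    using outer_reg[OF Xs] by simp
  then obtain U where U: "openin T U" "XX \<subseteq> U" "emeasure \<mu> U < ennreal (measure \<mu> XX / d)"
    unfolding INF_less_iff by blast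
  have "ennreal (measure \<mu> U) < ennreal (measure \<mu> XX / d)"
    using U(3) finite_measure.emeasure_eq_measure[OF fin] by metis
  then have mU: "measure \<mu> U < measure \<mu> XX / d"
    by (simp add: ennreal_less_iff)
  have Us: "U \<in> sets \<mu>" using sets_open[OF U(1)] .
  have Xcpt: "compactin T XX" using closedin_compact_space[OF cpt XX(1)] .
  obtain N where N: "N \<lhd> G" "openin T N" "\<forall>x\<in>XX. x <# N \<subseteq> U"
    using compact_nbhd[OF Xcpt U(1,2)] by blast
  have Nsub: "subgroup N G" using N(1) normal_imp_subgroup by blast
  have Ns: "N \<in> sets \<mu>" using sets_open[OF N(2)] .
  have Hc: "\<And>t. t \<in> carrier G \<Longrightarrow> measure \<mu> (XX \<inter> (t <# N)) \<le> c * measure \<mu> N"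
    using H N(1,2) by (meson not_le)
  define CC where "CC = {C \<in> rcosets N. C \<inter> XX \<noteq> {}}"
  have CCfin: "finite CC" unfolding CC_def using finite_rcosets[OF Nsub N(2)] by simp
  have CCprop: "\<And>C. C \<in> CC \<Longrightarrow> C \<in> sets \<mu> \<and> measure \<mu> C = measure \<mu> N \<and> (\<exists>g\<in>carrier G. C = g <# N)"
    unfolding CC_def using normal_coset_meas[OF N(1,2)] by blast
  have XCC: "XX \<subseteq> \<Union>CC"
  proof
    fix x assume x: "x \<in> XX"
    have xc: "x \<in> carrier G" using x XX(1) top closedin_subset by blast
    have "N #> x \<in> rcosets N" using xc unfolding RCOSETS_def by auto
    moreover have "x \<in> N #> x" using rcos_self[OF xc Nsub] .
    ultimately show "x \<in> \<Union>CC" unfolding CC_def using x by blast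
  qed
  have CCU: "\<Union>CC \<subseteq> U"
  proof
    fix z assume "z \<in> \<Union>CC"
    then obtain C where C: "C \<in> CC" "z \<in> C" by blast
    obtain x where x: "x \<in> C" "x \<in> XX" using C(1) unfolding CC_def by blast
    obtain g where g: "g \<in> carrier G" "C = g <# N" using CCprop[OF C(1)] by blast
    have "g <# N = x <# N" using l_repr_independence[of x g N] x g Nsub by simp
    then show "z \<in> U" using N(3) x C g by auto
  qed
  have "measure \<mu> XX \<le> measure \<mu> (\<Union>C\<in>CC. XX \<inter> C)"
    using XCC Xs CCprop CCfin
    by (intro finite_measure.finite_measure_mono[OF fin]) auto
  also have "\<dots> \<le> (\<Sum>C\<in>CC. measure \<mu> (XX \<inter> C))"
    using Xs CCprop CCfin
    by (intro finite_measure.finite_measure_subadditive_finite[OF fin]) auto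
  also have "\<dots> \<le> (\<Sum>C\<in>CC. c * measure \<mu> N)"
  proof (rule sum_mono)
    fix C assume "C \<in> CC"
    then obtain g where "g \<in> carrier G" "C = g <# N" using CCprop by blast
    then show "measure \<mu> (XX \<inter> C) \<le> c * measure \<mu> N" using Hc by simp
  qed
  also have "\<dots> = c * (\<Sum>C\<in>CC. measure \<mu> C)"
    using CCprop by (simp add: sum_distrib_left)
  also have "(\<Sum>C\<in>CC. measure \<mu> C) = measure \<mu> (\<Union>C\<in>CC. C)"
  proof (rule finite_measure.finite_measure_finite_Union[OF fin CCfin, symmetric])
    show "(\<lambda>C. C) ` CC \<subseteq> sets \<mu>" using CCprop by auto
    have "disjoint (rcosets N)" using rcos_disjoint[OF Nsub] .
    then show "disjoint_family_on (\<lambda>C. C) CC"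
      unfolding disjoint_family_on_def CC_def pairwise_def disjnt_def by blast
  qed
  also have "measure \<mu> (\<Union>C\<in>CC. C) \<le> measure \<mu> U"
    using CCU Us by (intro finite_measure.finite_measure_mono[OF fin]) auto
  finally have "measure \<mu> XX \<le> c * measure \<mu> U"
    using c(1) by (simp add: mult_left_mono)
  also have "\<dots> \<le> d * measure \<mu> U" using d(2) by (simp add: mult_right_mono)
  also have "\<dots> < measure \<mu> XX" using mU d(1) by (simp add: less_divide_eq mult.commute)
  finally show False by simp
qed

end

context group begin

lemma gcancel1 [simp]: "x \<in> carrier G \<Longrightarrow> y \<in> carrier G \<Longrightarrow> x \<otimes> (inv x \<otimes> y) = y"
  by (simp add: m_assoc[symmetric])

lemma gcancel2 [simp]: "x \<in> carrier G \<Longrightarrow> y \<in> carrier G \<Longrightarrow> inv x \<otimes> (x \<otimes> y) = y"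
  by (simp add: m_assoc[symmetric])

lemma foldr_closed:
  "(\<And>i. i \<in> set xs \<Longrightarrow> g i \<in> carrier G) \<Longrightarrow> a \<in> carrier G \<Longrightarrow> foldr (\<lambda>i acc. g i \<otimes> acc) xs a \<in> carrier G"
  by (induction xs) auto

lemma foldr_shift:
  "(\<And>i. i \<in> set xs \<Longrightarrow> g i \<in> carrier G) \<Longrightarrow> a \<in> carrier G \<Longrightarrow>
    foldr (\<lambda>i acc. g i \<otimes> acc) xs a = foldr (\<lambda>i acc. g i \<otimes> acc) xs \<one> \<otimes> a"
proof (induction xs)
  case Nil
  then show ?case by simp
next
  case (Cons x xs)
  have "foldr (\<lambda>i acc. g i \<otimes> acc) (x # xs) a = g x \<otimes> (foldr (\<lambda>i acc. g i \<otimes> acc) xs \<one> \<otimes> a)"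
    using Cons by simp
  also have "\<dots> = (g x \<otimes> foldr (\<lambda>i acc. g i \<otimes> acc) xs \<one>) \<otimes> a"
    using Cons foldr_closed[of xs g \<one>] by (simp add: m_assoc)
  finally show ?case by simp
qed

lemma conj_iter:
  assumes "t \<in> carrier G" "x \<in> carrier G"
  shows "((\<lambda>x. t \<otimes> x \<otimes> inv t) ^^ i) x = t [^] i \<otimes> x \<otimes> inv (t [^] i)"
proof (induction i)
  case 0
  then show ?case using assms by simp
next
  case (Suc i)
  have "((\<lambda>x. t \<otimes> x \<otimes> inv t) ^^ Suc i) x = t \<otimes> (t [^] i \<otimes> x \<otimes> inv (t [^] i)) \<otimes> inv t"
    using Suc by simp
  also have "\<dots> = (t \<otimes> t [^] i) \<otimes> x \<otimes> (inv (t [^] i) \<otimes> inv t)"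
    using assms by (simp add: m_assoc)
  also have "\<dots> = t [^] Suc i \<otimes> x \<otimes> inv (t [^] Suc i)"
  proof -
    have e1: "t [^] Suc i = t \<otimes> t [^] i" by (rule nat_pow_Suc2[OF assms(1)])
    have e2: "inv (t \<otimes> t [^] i) = inv (t [^] i) \<otimes> inv t"
      using assms by (simp add: inv_mult_group)
    show ?thesis by (simp only: e1 e2)
  qed
  finally show ?case .
qed

lemma conj_iter_closed:
  assumes "t \<in> carrier G" "x \<in> carrier G"
  shows "((\<lambda>x. t \<otimes> x \<otimes> inv t) ^^ i) x \<in> carrier G"
  using conj_iter[OF assms] assms by simp

lemma twisted_Suc:
  assumes "\<And>i. (\<psi> ^^ i) y \<in> carrier G"
  shows "twisted_prod G \<psi> (Suc k) y = twisted_prod G \<psi> k y \<otimes> (\<psi> ^^ k) y"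
proof -
  have "twisted_prod G \<psi> (Suc k) y = foldr (\<lambda>i acc. (\<psi> ^^ i) y \<otimes> acc) [0..<k] ((\<psi> ^^ k) y \<otimes> \<one>)"
    unfolding twisted_prod_def by simp
  also have "\<dots> = twisted_prod G \<psi> k y \<otimes> (\<psi> ^^ k) y"
    unfolding twisted_prod_def using assms by (subst foldr_shift) auto
  finally show ?thesis .
qed

lemma twisted_closed:
  assumes "\<And>i. (\<psi> ^^ i) y \<in> carrier G"
  shows "twisted_prod G \<psi> k y \<in> carrier G"
  unfolding twisted_prod_def using assms by (intro foldr_closed) auto

lemma pow_twist:
  assumes t: "t \<in> carrier G" and y: "y \<in> carrier G"
  shows "(y \<otimes> t) [^] k = twisted_prod G (\<lambda>x. t \<otimes> x \<otimes> inv t) k y \<otimes> t [^] k"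
proof (induction k)
  case 0
  then show ?case by (simp add: twisted_prod_def)
next
  case (Suc k)
  let ?P = "twisted_prod G (\<lambda>x. t \<otimes> x \<otimes> inv t) k y"
  have Pc: "?P \<in> carrier G" using twisted_closed conj_iter_closed[OF t y] by blast
  have "(y \<otimes> t) [^] Suc k = (?P \<otimes> t [^] k) \<otimes> (y \<otimes> t)"
    using Suc by simp
  also have "\<dots> = (?P \<otimes> (t [^] k \<otimes> y \<otimes> inv (t [^] k))) \<otimes> (t [^] k \<otimes> t)"
  proof -
    have "inv (t [^] k) \<otimes> (t [^] k \<otimes> t) = t" using t by (simp add: m_assoc[symmetric])
    then show ?thesis using Pc t y by (simp add: m_assoc)
  qed
  also have "\<dots> = twisted_prod G (\<lambda>x. t \<otimes> x \<otimes> inv t) (Suc k) y \<otimes> t [^] Suc k"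
    using twisted_Suc[of "\<lambda>x. t \<otimes> x \<otimes> inv t" y k] conj_iter_closed[OF t y] conj_iter[OF t y]
    by simp
  finally show ?case .
qed

lemma pow_conj:
  assumes t: "t \<in> carrier G" and y: "y \<in> carrier G"
  shows "(t \<otimes> y) [^] (k::nat) = t \<otimes> (y \<otimes> t) [^] k \<otimes> inv t"
proof (induction k)
  case 0
  then show ?case using t by simp
next
  case (Suc k)
  have "(t \<otimes> y) [^] Suc k = (t \<otimes> (y \<otimes> t) [^] k \<otimes> inv t) \<otimes> (t \<otimes> y)"
    using Suc by simp
  also have "\<dots> = t \<otimes> ((y \<otimes> t) [^] k \<otimes> (y \<otimes> t)) \<otimes> inv t"
    using t y by (simp add: m_assoc)
  finally show ?case by simp
qed

end

lemma transfer_nat: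
  fixes Q :: "('c, 'd) monoid_scheme" and \<phi> :: "'c \<Rightarrow> 'c"
  assumes Q: "group Q" "finite (carrier Q)" and phi: "\<phi> \<in> iso Q Q" "\<forall>x\<in>carrier Q. (\<phi> ^^ n) x = x"
  shows "\<exists>(H::nat monoid) \<psi>. group H \<and> finite (carrier H) \<and> \<psi> \<in> iso H H \<and> (\<forall>x\<in>carrier H. (\<psi> ^^ n) x = x)
           \<and> card (X_twisted H \<psi> n) = card (X_twisted Q \<phi> n) \<and> card (carrier H) = card (carrier Q)"
proof -
  interpret Q: group Q by (rule Q(1))
  define k where "k = card (carrier Q)"
  obtain f where f: "bij_betw f {0..<k} (carrier Q)"
    using ex_bij_betw_nat_finite[OF Q(2)] unfolding k_def by blast
  define g where "g = inv_into {0..<k} f"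
  have g: "bij_betw g (carrier Q) {0..<k}" using bij_betw_inv_into[OF f] unfolding g_def .
  have fg: "\<And>x. x \<in> carrier Q \<Longrightarrow> f (g x) = x"
    using f unfolding g_def by (simp add: bij_betw_inv_into_right)
  have gf: "\<And>a. a \<in> {0..<k} \<Longrightarrow> g (f a) = a"
    using f unfolding g_def by (simp add: bij_betw_inv_into_left)
  have fc: "\<And>a. a \<in> {0..<k} \<Longrightarrow> f a \<in> carrier Q" using f by (auto simp: bij_betw_def)
  have gc: "\<And>x. x \<in> carrier Q \<Longrightarrow> g x \<in> {0..<k}" using g by (auto simp: bij_betw_def)
  define H :: "nat monoid" where "H = \<lparr>carrier = {0..<k}, mult = (\<lambda>a b. g (f a \<otimes>\<^bsub>Q\<^esub> f b)), one = g \<one>\<^bsub>Q\<^esub>\<rparr>"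
  have Hc: "carrier H = {0..<k}" by (simp add: H_def)
  have Hm: "\<And>a b. a \<otimes>\<^bsub>H\<^esub> b = g (f a \<otimes>\<^bsub>Q\<^esub> f b)" by (simp add: H_def)
  have H1: "\<one>\<^bsub>H\<^esub> = g \<one>\<^bsub>Q\<^esub>" by (simp add: H_def)
  have grpH: "group H"
  proof (rule groupI)
    fix x y assume "x \<in> carrier H" "y \<in> carrier H"
    then show "x \<otimes>\<^bsub>H\<^esub> y \<in> carrier H" using Hc Hm fc gc by simp
  next
    show "\<one>\<^bsub>H\<^esub> \<in> carrier H" using Hc H1 gc by simp
  next
    fix x y z assume xyz: "x \<in> carrier H" "y \<in> carrier H" "z \<in> carrier H"
    then show "x \<otimes>\<^bsub>H\<^esub> y \<otimes>\<^bsub>H\<^esub> z = x \<otimes>\<^bsub>H\<^esub> (y \<otimes>\<^bsub>H\<^esub> z)"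
      using Hc Hm fc fg by (simp add: Q.m_assoc)
  next
    fix x assume "x \<in> carrier H"
    then show "\<one>\<^bsub>H\<^esub> \<otimes>\<^bsub>H\<^esub> x = x" using Hc Hm H1 fc fg gf by simp
  next
    fix x assume x: "x \<in> carrier H"
    have "g (inv\<^bsub>Q\<^esub> (f x)) \<in> carrier H" using x Hc fc gc by simp
    moreover have "g (inv\<^bsub>Q\<^esub> (f x)) \<otimes>\<^bsub>H\<^esub> x = \<one>\<^bsub>H\<^esub>" using x Hc Hm H1 fc fg by simp
    ultimately show "\<exists>y\<in>carrier H. y \<otimes>\<^bsub>H\<^esub> x = \<one>\<^bsub>H\<^esub>" by blast
  qed
  have f_iso: "f \<in> iso H Q"
    unfolding iso_def hom_def using f fc fg Hc Hm by (auto simp: Pi_def)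
  have g_iso: "g \<in> iso Q H"
    unfolding iso_def hom_def using g gc fg Hc Hm by (auto simp: Pi_def)
  define \<psi> where "\<psi> = g \<circ> (\<phi> \<circ> f)"
  have psi_iso: "\<psi> \<in> iso H H"
    unfolding \<psi>_def by (rule iso_set_trans[OF iso_set_trans[OF f_iso phi(1)] g_iso])
  have phic: "\<And>x. x \<in> carrier Q \<Longrightarrow> \<phi> x \<in> carrier Q"
    using phi(1) unfolding iso_def hom_def by auto
  have phiit: "\<And>x. x \<in> carrier Q \<Longrightarrow> (\<phi> ^^ i) x \<in> carrier Q" for i
    by (induction i) (auto simp: phic)
  have psiit: "\<And>a. a \<in> {0..<k} \<Longrightarrow> (\<psi> ^^ i) a = g ((\<phi> ^^ i) (f a))" for i
  proof (induction i)
    case 0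
    then show ?case using gf by simp
  next
    case (Suc i)
    then show ?case using fg phiit fc by (simp add: \<psi>_def)
  qed
  have per: "\<forall>x\<in>carrier H. (\<psi> ^^ n) x = x"
    using psiit phi(2) fc gf Hc by simp
  have tw: "foldr (\<lambda>i acc. (\<psi> ^^ i) a \<otimes>\<^bsub>H\<^esub> acc) xs \<one>\<^bsub>H\<^esub> = g (foldr (\<lambda>i acc. (\<phi> ^^ i) (f a) \<otimes>\<^bsub>Q\<^esub> acc) xs \<one>\<^bsub>Q\<^esub>)"
    if a: "a \<in> {0..<k}" for a xs
  proof (induction xs)
    case Nil
    then show ?case using H1 by simp
  next
    case (Cons i xs)
    have R: "foldr (\<lambda>i acc. (\<phi> ^^ i) (f a) \<otimes>\<^bsub>Q\<^esub> acc) xs \<one>\<^bsub>Q\<^esub> \<in> carrier Q"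
      using Q.foldr_closed[of xs "\<lambda>i. (\<phi> ^^ i) (f a)" "\<one>\<^bsub>Q\<^esub>"] phiit fc a by auto
    show ?case using Cons R Hm psiit[OF a] fg phiit fc a by simp
  qed
  have twc: "twisted_prod Q \<phi> n x \<in> carrier Q" if "x \<in> carrier Q" for x
    unfolding twisted_prod_def using that phiit by (intro Q.foldr_closed) auto
  have injg: "inj_on g (carrier Q)" using g by (auto simp: bij_betw_def)
  have XH: "X_twisted H \<psi> n = {a \<in> {0..<k}. twisted_prod Q \<phi> n (f a) = \<one>\<^bsub>Q\<^esub>}"
  proof -
    have "\<And>a. a \<in> {0..<k} \<Longrightarrow> (twisted_prod H \<psi> n a = \<one>\<^bsub>H\<^esub>) = (twisted_prod Q \<phi> n (f a) = \<one>\<^bsub>Q\<^esub>)"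
    proof -
      fix a assume a: "a \<in> {0..<k}"
      have "twisted_prod H \<psi> n a = g (twisted_prod Q \<phi> n (f a))"
        unfolding twisted_prod_def using tw[OF a] by simp
      then show "(twisted_prod H \<psi> n a = \<one>\<^bsub>H\<^esub>) = (twisted_prod Q \<phi> n (f a) = \<one>\<^bsub>Q\<^esub>)"
        using H1 injg twc[OF fc[OF a]] inj_on_eq_iff[OF injg] by simp
    qed
    then show ?thesis unfolding X_twisted_def using Hc by auto
  qed
  have "f ` X_twisted H \<psi> n = X_twisted Q \<phi> n"
  proof
    show "f ` X_twisted H \<psi> n \<subseteq> X_twisted Q \<phi> n"
      unfolding XH using fc by (auto simp: X_twisted_def)
    show "X_twisted Q \<phi> n \<subseteq> f ` X_twisted H \<psi> n"
    proof
      fix x assume x: "x \<in> X_twisted Q \<phi> n"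
      then have "x = f (g x)" "g x \<in> X_twisted H \<psi> n"
        unfolding XH using fg gc by (auto simp: X_twisted_def)
      then show "x \<in> f ` X_twisted H \<psi> n" by blast
    qed
  qed
  moreover have "inj_on f (X_twisted H \<psi> n)"
    using f unfolding XH bij_betw_def by (auto intro: inj_on_subset)
  ultimately have cardX: "card (X_twisted H \<psi> n) = card (X_twisted Q \<phi> n)"
    by (metis card_image)
  have "finite (carrier H)" "card (carrier H) = card (carrier Q)" using Hc k_def by auto
  then show ?thesis
    using grpH psi_iso per cardX by blast
qed

context hgrp begin

lemma stepB:
  assumes t: "t \<in> carrier G" "t [^] n = \<one>"
    and N: "N \<lhd> G" "openin T N"
    and M: "M \<lhd> G" "openin T M" "M \<subseteq> N"
    and big: "measure \<mu> ({x \<in> carrier G. x [^] n = \<one>} \<inter> (t <# N)) > c * measure \<mu> N"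
    and c0: "0 \<le> c"
    and bound: "\<And>(H::nat monoid) \<phi>. group H \<Longrightarrow> finite (carrier H) \<Longrightarrow> \<phi> \<in> iso H H \<Longrightarrow>
        (\<forall>x\<in>carrier H. (\<phi> ^^ n) x = x) \<Longrightarrow>
        real (card (X_twisted H \<phi> n)) / real (card (carrier H)) \<noteq> 1 \<Longrightarrow>
        real (card (X_twisted H \<phi> n)) / real (card (carrier H)) \<le> c"
  shows "\<forall>y\<in>N. (t \<otimes> y) [^] n \<in> M"
proof -
  define XX where "XX = {x \<in> carrier G. x [^] n = \<one>}"
  have Nsub: "subgroup N G" using N(1) normal_imp_subgroup by blast
  have Msub: "subgroup M G" using M(1) normal_imp_subgroup by blast
  have Nc: "N \<subseteq> carrier G" using subgroup.subset[OF Nsub] .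
  have Mc: "M \<subseteq> carrier G" using subgroup.subset[OF Msub] .
  have conjN: "\<And>x h. x \<in> carrier G \<Longrightarrow> h \<in> N \<Longrightarrow> x \<otimes> h \<otimes> inv x \<in> N"
    using N(1) normal_inv_iff by blast
  have conjM: "\<And>x h. x \<in> carrier G \<Longrightarrow> h \<in> M \<Longrightarrow> x \<otimes> h \<otimes> inv x \<in> M"
    using M(1) normal_inv_iff by blast
  define Nn where "Nn = G\<lparr>carrier := N\<rparr>"
  have grpNn: "group Nn" unfolding Nn_def using subgroup_imp_group[OF Nsub] .
  have MNn: "M \<lhd> Nn" unfolding Nn_def using normal_restrict_supergroup[OF Nsub M(1) M(3)] .
  have MsubNn: "subgroup M Nn" using normal_imp_subgroup[OF MNn] .
  define Q where "Q = Nn Mod M"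
  have grpQ: "group Q" unfolding Q_def using normal.factorgroup_is_group[OF MNn] .
  have rc: "\<And>y. M #>\<^bsub>Nn\<^esub> y = M #> y" unfolding Nn_def by (simp add: r_coset_def)
  have carQ: "carrier Q = (\<lambda>y. M #> y) ` N"
    unfolding Q_def FactGroup_def RCOSETS_def using rc by (auto simp: Nn_def)
  have carQ2: "carrier Q = rcosets\<^bsub>Nn\<^esub> M" unfolding Q_def FactGroup_def by simp
  have mulQ: "\<And>A B. A \<otimes>\<^bsub>Q\<^esub> B = A <#> B"
    unfolding Q_def FactGroup_def Nn_def by (simp add: set_mult_def)
  have oneQ: "\<one>\<^bsub>Q\<^esub> = M" unfolding Q_def FactGroup_def by simp
  have rsum: "\<And>a b. a \<in> carrier G \<Longrightarrow> b \<in> carrier G \<Longrightarrow> (M #> a) <#> (M #> b) = M #> (a \<otimes> b)"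
    using normal.rcos_sum[OF M(1)] by blast
  define \<psi> where "\<psi> = (\<lambda>x. t \<otimes> x \<otimes> inv t)"
  define \<phi> where "\<phi> = (\<lambda>C. \<psi> ` C)"
  have psic: "\<And>x. x \<in> carrier G \<Longrightarrow> \<psi> x \<in> carrier G" unfolding \<psi>_def using t by simp
  have psiN: "\<And>x. x \<in> N \<Longrightarrow> \<psi> x \<in> N" unfolding \<psi>_def using t conjN by simp
  have psimult: "\<And>a b. a \<in> carrier G \<Longrightarrow> b \<in> carrier G \<Longrightarrow> \<psi> (a \<otimes> b) = \<psi> a \<otimes> \<psi> b"
    unfolding \<psi>_def using t by (simp add: m_assoc)
  have phi_coset: "\<And>y. y \<in> carrier G \<Longrightarrow> \<phi> (M #> y) = M #> \<psi> y"
  proof -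
    fix y assume y: "y \<in> carrier G"
    show "\<phi> (M #> y) = M #> \<psi> y"
    proof
      show "\<phi> (M #> y) \<subseteq> M #> \<psi> y"
      proof
        fix z assume "z \<in> \<phi> (M #> y)"
        then obtain m where m: "m \<in> M" "z = \<psi> (m \<otimes> y)" unfolding \<phi>_def by (auto simp: r_coset_def)
        have mc: "m \<in> carrier G" using m Mc by auto
        have "z = \<psi> m \<otimes> \<psi> y" using m psimult mc y by simp
        moreover have "\<psi> m \<in> M" unfolding \<psi>_def using conjM t m by simp
        ultimately show "z \<in> M #> \<psi> y" by (auto simp: r_coset_def)
      qed
      show "M #> \<psi> y \<subseteq> \<phi> (M #> y)"
      proof
        fix z assume "z \<in> M #> \<psi> y"
        then obtain m where m: "m \<in> M" "z = m \<otimes> \<psi> y" by (auto simp: r_coset_def)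
        have mc: "m \<in> carrier G" using m Mc by auto
        define m' where "m' = inv t \<otimes> m \<otimes> t"
        have m'M: "m' \<in> M" unfolding m'_def using conjM[of "inv t" m] t m by simp
        have m'c: "m' \<in> carrier G" using m'M Mc by auto
        have "\<psi> m' = m" unfolding \<psi>_def m'_def using t mc by (simp add: m_assoc)
        then have "z = \<psi> (m' \<otimes> y)" using m psimult m'c y by simp
        moreover have "m' \<otimes> y \<in> M #> y" using m'M by (auto simp: r_coset_def)
        ultimately show "z \<in> \<phi> (M #> y)" unfolding \<phi>_def by blast
      qed
    qed
  qed
  have psiit: "\<And>i y. y \<in> carrier G \<Longrightarrow> (\<psi> ^^ i) y = t [^] i \<otimes> y \<otimes> inv (t [^] i)"
    unfolding \<psi>_def using conj_iter t by blast
  have psiitc: "\<And>i y. y \<in> carrier G \<Longrightarrow> (\<psi> ^^ i) y \<in> carrier G"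
    using psiit t by simp
  have psiitN: "\<And>i y. y \<in> N \<Longrightarrow> (\<psi> ^^ i) y \<in> N"
    using psiit t conjN Nc by (metis nat_pow_closed subsetD)
  have phiit: "\<And>i y. y \<in> carrier G \<Longrightarrow> (\<phi> ^^ i) (M #> y) = M #> (\<psi> ^^ i) y"
  proof -
    fix i y assume y: "y \<in> carrier G"
    show "(\<phi> ^^ i) (M #> y) = M #> (\<psi> ^^ i) y"
      by (induction i) (simp_all add: phi_coset psiitc y)
  qed
  have finQ: "finite (carrier Q)"
  proof -
    have "carrier Q \<subseteq> rcosets M" unfolding carQ RCOSETS_def using Nc by auto
    then show ?thesis using finite_rcosets[OF Msub M(2)] finite_subset by blast
  qed
  have phi_iso: "\<phi> \<in> iso Q Q"
  proof -
    have closed: "\<phi> C \<in> carrier Q" if C: "C \<in> carrier Q" for C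
    proof -
      obtain a where a: "a \<in> N" "C = M #> a" using C carQ by blast
      have ac: "a \<in> carrier G" using a(1) Nc by blast
      have "\<phi> C = M #> \<psi> a" using phi_coset[OF ac] a(2) by simp
      moreover have "\<psi> a \<in> N" using psiN[OF a(1)] .
      ultimately show ?thesis using carQ by blast
    qed
    have hom: "\<phi> \<in> hom Q Q"
    proof (unfold hom_def, intro CollectI conjI Pi_I ballI)
      fix C assume "C \<in> carrier Q" then show "\<phi> C \<in> carrier Q" using closed by blast
    next
      fix C D assume C: "C \<in> carrier Q" and D: "D \<in> carrier Q"
      obtain a where a: "a \<in> N" "C = M #> a" using C carQ by auto
      obtain b where b: "b \<in> N" "D = M #> b" using D carQ by auto
      have ac: "a \<in> carrier G" and bc: "b \<in> carrier G" using a b Nc by auto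
      have "\<phi> (C \<otimes>\<^bsub>Q\<^esub> D) = \<phi> (M #> (a \<otimes> b))" using a b ac bc mulQ rsum by simp
      also have "\<dots> = M #> (\<psi> a \<otimes> \<psi> b)" using phi_coset psimult ac bc by simp
      also have "\<dots> = \<phi> C \<otimes>\<^bsub>Q\<^esub> \<phi> D" using a b ac bc mulQ rsum phi_coset psic by simp
      finally show "\<phi> (C \<otimes>\<^bsub>Q\<^esub> D) = \<phi> C \<otimes>\<^bsub>Q\<^esub> \<phi> D" .
    qed
    have injpsi: "inj_on \<psi> (carrier G)"
    proof (rule inj_onI)
      fix x y assume x: "x \<in> carrier G" and y: "y \<in> carrier G" and e: "\<psi> x = \<psi> y"
      have e1: "inv t \<otimes> \<psi> x \<otimes> t = x" unfolding \<psi>_def using t(1) x by (simp add: m_assoc)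
      have e2: "inv t \<otimes> \<psi> y \<otimes> t = y" unfolding \<psi>_def using t(1) y by (simp add: m_assoc)
      have "x = inv t \<otimes> \<psi> x \<otimes> t" using e1 by simp
      also have "\<dots> = inv t \<otimes> \<psi> y \<otimes> t" by (simp only: e)
      also have "\<dots> = y" by (rule e2)
      finally show "x = y" .
    qed
    have inj: "inj_on \<phi> (carrier Q)"
    proof (rule inj_onI)
      fix C D assume C: "C \<in> carrier Q" and D: "D \<in> carrier Q" and e: "\<phi> C = \<phi> D"
      obtain a where a: "a \<in> N" "C = M #> a" using C carQ by blast
      obtain b where b: "b \<in> N" "D = M #> b" using D carQ by blast
      have "C \<subseteq> carrier G" "D \<subseteq> carrier G"
        using r_coset_subset_G[OF Mc] a b Nc by blast+
      moreover have "\<psi> ` C = \<psi> ` D" using e unfolding \<phi>_def .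
      ultimately show "C = D" using inj_on_image_eq_iff[OF injpsi] by metis
    qed
    have surj: "\<phi> ` carrier Q = carrier Q"
    proof
      show "\<phi> ` carrier Q \<subseteq> carrier Q" using closed by blast
      show "carrier Q \<subseteq> \<phi> ` carrier Q"
      proof
        fix C assume C: "C \<in> carrier Q"
        obtain a where a: "a \<in> N" "C = M #> a" using C carQ by auto
        have ac: "a \<in> carrier G" using a Nc by auto
        define a' where "a' = inv t \<otimes> a \<otimes> t"
        have a'N: "a' \<in> N" unfolding a'_def using conjN[of "inv t" a] t a by simp
        have "\<psi> a' = a" unfolding \<psi>_def a'_def using t ac by (simp add: m_assoc)
        moreover have "a' \<in> carrier G" using a'N Nc by blast
        ultimately have "C = \<phi> (M #> a')" using phi_coset a(2) by simp
        moreover have "M #> a' \<in> carrier Q" using carQ a'N by blast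
        ultimately show "C \<in> \<phi> ` carrier Q" by blast
      qed
    qed
    have "bij_betw \<phi> (carrier Q) (carrier Q)" unfolding bij_betw_def using inj surj by simp
    then show ?thesis unfolding iso_def using hom by simp
  qed
  have phi_per: "\<forall>C\<in>carrier Q. (\<phi> ^^ n) C = C"
  proof
    fix C assume "C \<in> carrier Q"
    then obtain a where a: "a \<in> N" "C = M #> a" using carQ by blast
    have ac: "a \<in> carrier G" using a Nc by blast
    have "(\<phi> ^^ n) C = M #> (\<psi> ^^ n) a" using phiit[OF ac] a(2) by simp
    also have "(\<psi> ^^ n) a = a" using psiit[OF ac] t ac by simp
    finally show "(\<phi> ^^ n) C = C" using a(2) by simp
  qed
  define P where "P = (\<lambda>y. twisted_prod G \<psi> n y)"
  have Pc: "P y \<in> carrier G" if y: "y \<in> carrier G" for y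
    unfolding P_def by (rule twisted_closed) (rule psiitc[OF y])
  have twQ: "\<And>y. y \<in> N \<Longrightarrow> twisted_prod Q \<phi> n (M #> y) = M #> P y"
  proof -
    fix y assume yN: "y \<in> N"
    have y: "y \<in> carrier G" using yN Nc by auto
    have "foldr (\<lambda>i acc. (\<phi> ^^ i) (M #> y) \<otimes>\<^bsub>Q\<^esub> acc) xs \<one>\<^bsub>Q\<^esub> = M #> foldr (\<lambda>i acc. (\<psi> ^^ i) y \<otimes> acc) xs \<one>" for xs
    proof (induction xs)
      case Nil
      then show ?case using oneQ coset_mult_one[OF Mc] by simp
    next
      case (Cons i xs)
      have R: "foldr (\<lambda>i acc. (\<psi> ^^ i) y \<otimes> acc) xs \<one> \<in> carrier G"
        by (rule foldr_closed) (auto intro: psiitc[OF y])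
      show ?case using Cons mulQ phiit[OF y] rsum[OF psiitc[OF y] R] by simp
    qed
    then show "twisted_prod Q \<phi> n (M #> y) = M #> P y"
      unfolding twisted_prod_def P_def by simp
  qed
  have powP: "(t \<otimes> y) [^] n = t \<otimes> P y \<otimes> inv t" if y: "y \<in> carrier G" for y
  proof -
    have "(t \<otimes> y) [^] n = t \<otimes> (y \<otimes> t) [^] n \<otimes> inv t" by (rule pow_conj[OF t(1) y])
    also have "(y \<otimes> t) [^] n = P y \<otimes> t [^] n" unfolding P_def \<psi>_def by (rule pow_twist[OF t(1) y])
    also have "P y \<otimes> t [^] n = P y" using t Pc[OF y] by simp
    finally show ?thesis .
  qed
  define Gd where "Gd = X_twisted Q \<phi> n"
  have GdQ: "Gd \<subseteq> carrier Q" unfolding Gd_def X_twisted_def by auto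
  have coset_meas: "\<And>C. C \<in> carrier Q \<Longrightarrow> t <# C \<in> sets \<mu> \<and> measure \<mu> (t <# C) = measure \<mu> M \<and> C \<in> sets \<mu> \<and> measure \<mu> C = measure \<mu> M"
  proof -
    fix C assume "C \<in> carrier Q"
    then obtain a where a: "a \<in> N" "C = M #> a" using carQ by auto
    have ac: "a \<in> carrier G" using a Nc by auto
    have Ca: "C = a <# M" using a ac normal.coset_eq[OF M(1)] by auto
    have tC: "t <# C = (t \<otimes> a) <# M" using Ca lcos_m_assoc[OF Mc t(1) ac] by simp
    have Ms: "M \<in> sets \<mu>" using sets_open[OF M(2)] .
    show "?thesis C"
      using Ca tC meas_lcos[OF ac Ms] meas_lcos[of "t \<otimes> a", OF _ Ms] t ac
        sets_open[OF open_lcos[OF M(2) ac]] sets_open[OF open_lcos[OF M(2), of "t \<otimes> a"]] by simp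
  qed
  have claim1: "XX \<inter> (t <# N) \<subseteq> (\<Union>C\<in>Gd. t <# C)"
  proof
    fix z assume z: "z \<in> XX \<inter> (t <# N)"
    then obtain y where y: "y \<in> N" "z = t \<otimes> y" by (auto simp: l_coset_def)
    have yc: "y \<in> carrier G" using y Nc by auto
    have "(t \<otimes> y) [^] n = \<one>" using z y unfolding XX_def by simp
    then have "t \<otimes> P y \<otimes> inv t = \<one>" using powP[OF yc] by simp
    then have "inv t \<otimes> (t \<otimes> P y \<otimes> inv t) \<otimes> t = \<one>" using t by simp
    then have Py: "P y = \<one>" using t Pc[OF yc] by (simp add: m_assoc)
    have CQ: "M #> y \<in> carrier Q" using carQ y by auto
    have "twisted_prod Q \<phi> n (M #> y) = \<one>\<^bsub>Q\<^esub>"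
      using twQ[OF y(1)] Py oneQ coset_mult_one[OF Mc] by simp
    then have "M #> y \<in> Gd" unfolding Gd_def X_twisted_def using CQ by simp
    moreover have "z \<in> t <# (M #> y)"
      using rcos_self[OF yc Msub] y by (auto simp: l_coset_def)
    ultimately show "z \<in> (\<Union>C\<in>Gd. t <# C)" by blast
  qed
  have finGd: "finite Gd" using GdQ finQ finite_subset by blast
  have "measure \<mu> (XX \<inter> (t <# N)) \<le> measure \<mu> (\<Union>C\<in>Gd. t <# C)"
    using claim1 coset_meas GdQ finGd
    by (intro finite_measure.finite_measure_mono[OF fin]) auto
  also have "\<dots> \<le> (\<Sum>C\<in>Gd. measure \<mu> (t <# C))"
    using coset_meas GdQ finGd
    by (intro finite_measure.finite_measure_subadditive_finite[OF fin]) auto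
  also have "\<dots> = (\<Sum>C\<in>Gd. measure \<mu> M)"
    using coset_meas GdQ by (intro sum.cong) auto
  also have "\<dots> = real (card Gd) * measure \<mu> M" by simp
  finally have up: "measure \<mu> (XX \<inter> (t <# N)) \<le> real (card Gd) * measure \<mu> M" .
  have UQ: "\<Union>(carrier Q) = N"
    using group.rcosets_part_G[OF grpNn MsubNn] carQ2 by (simp add: Nn_def)
  have "measure \<mu> N = measure \<mu> (\<Union>C\<in>carrier Q. C)" using UQ by simp
  also have "\<dots> = (\<Sum>C\<in>carrier Q. measure \<mu> C)"
  proof (rule finite_measure.finite_measure_finite_Union[OF fin finQ])
    show "(\<lambda>C. C) ` carrier Q \<subseteq> sets \<mu>" using coset_meas by auto
    have "disjoint (carrier Q)" using group.rcos_disjoint[OF grpNn MsubNn] carQ2 by simp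
    then show "disjoint_family_on (\<lambda>C. C) (carrier Q)"
      unfolding disjoint_family_on_def pairwise_def disjnt_def by blast
  qed
  also have "\<dots> = (\<Sum>C\<in>carrier Q. measure \<mu> M)"
    using coset_meas by (intro sum.cong) auto
  also have "\<dots> = real (card (carrier Q)) * measure \<mu> M" by simp
  finally have NQ: "measure \<mu> N = real (card (carrier Q)) * measure \<mu> M" .
  have mM0: "0 \<le> measure \<mu> M" by simp
  have ineq: "c * (real (card (carrier Q)) * measure \<mu> M) < real (card Gd) * measure \<mu> M"
    using big up NQ unfolding XX_def by simp
  have mMpos: "0 < measure \<mu> M"
  proof (rule ccontr)
    assume "\<not> 0 < measure \<mu> M"
    then have "measure \<mu> M = 0" using mM0 by simp
    then show False using ineq by simp
  qed
  have cardQpos: "0 < card (carrier Q)"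
    using finQ group.is_monoid[OF grpQ] monoid.one_closed card_gt_0_iff by blast
  have ratio_gt: "c < real (card Gd) / real (card (carrier Q))"
  proof -
    have "c * real (card (carrier Q)) < real (card Gd)"
      using ineq mMpos by (simp add: mult.assoc[symmetric])
    then show ?thesis using cardQpos by (simp add: less_divide_eq)
  qed
  obtain H :: "nat monoid" and \<phi>' where H: "group H" "finite (carrier H)" "\<phi>' \<in> iso H H"
      "\<forall>x\<in>carrier H. (\<phi>' ^^ n) x = x" "card (X_twisted H \<phi>' n) = card (X_twisted Q \<phi> n)"
      "card (carrier H) = card (carrier Q)"
    using transfer_nat[OF grpQ finQ phi_iso phi_per] by blast
  have "real (card Gd) / real (card (carrier Q)) = 1"
  proof (rule ccontr)
    assume ne: "real (card Gd) / real (card (carrier Q)) \<noteq> 1"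
    have "real (card Gd) / real (card (carrier Q)) \<le> c"
      using bound[OF H(1-4)] ne H(5,6) unfolding Gd_def by simp
    then show False using ratio_gt by simp
  qed
  then have "card Gd = card (carrier Q)" using cardQpos by (simp add: divide_eq_1_iff)
  then have GdEq: "Gd = carrier Q" using card_subset_eq[OF finQ GdQ] by simp
  show ?thesis
  proof
    fix y assume yN: "y \<in> N"
    have yc: "y \<in> carrier G" using yN Nc by auto
    have "M #> y \<in> Gd" using GdEq carQ yN by auto
    then have "twisted_prod Q \<phi> n (M #> y) = M" unfolding Gd_def X_twisted_def using oneQ by simp
    then have "M #> P y = M" using twQ[OF yN] by simp
    then have PM: "P y \<in> M" using rcos_self[OF Pc[OF yc] Msub] by simp
    show "(t \<otimes> y) [^] n \<in> M" using powP[OF yc] conjM[OF t(1) PM] by simp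
  qed
qed

end

lemma c_bound:
  fixes H :: "nat monoid"
  assumes "group H" "finite (carrier H)" "\<phi> \<in> iso H H" "\<forall>x\<in>carrier H. (\<phi> ^^ n) x = x"
    and ne: "real (card (X_twisted H \<phi> n)) / real (card (carrier H)) \<noteq> 1"
  shows "real (card (X_twisted H \<phi> n)) / real (card (carrier H)) \<le> c_const n"
proof -
  define S where "S = {real (card (X_twisted H \<phi> n)) / real (card (carrier H)) | (H :: nat monoid) \<phi>.
       group H \<and> finite (carrier H) \<and> \<phi> \<in> iso H H \<and> (\<forall>x\<in>carrier H. (\<phi> ^^ n) x = x)}"
  have cS: "c_const n = Sup (S - {1})" unfolding c_const_def S_def by simp
  have mem: "real (card (X_twisted H \<phi> n)) / real (card (carrier H)) \<in> S - {1}"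
    unfolding S_def using assms by blast
  have le1: "r \<le> 1" if rS: "r \<in> S" for r
  proof -
    obtain H' :: "nat monoid" and \<phi>' where r: "r = real (card (X_twisted H' \<phi>' n)) / real (card (carrier H'))"
      and fin: "finite (carrier H')"
      using rS unfolding S_def by blast
    have "X_twisted H' \<phi>' n \<subseteq> carrier H'" unfolding X_twisted_def by auto
    then have "card (X_twisted H' \<phi>' n) \<le> card (carrier H')" using fin card_mono by blast
    then show "r \<le> 1" unfolding r
      by (cases "card (carrier H') = 0") (auto simp: divide_le_eq_1)
  qed
  have "bdd_above (S - {1})" using le1 by (auto simp: bdd_above_def)
  then show ?thesis using cS cSup_upper[OF mem] by simp
qed

lemma (in hgrp) main:
  assumes "n > 0" "c_const n < 1" "measure \<mu> {x \<in> carrier G. x [^] n = \<one>} > 0"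
  shows "\<exists>H t. subgroup H G \<and> openin T H \<and> t \<in> carrier G \<and>
           (\<forall>y \<in> t <# H. group.ord G y dvd n)"
proof -
  define c where "c = max (c_const n) 0"
  have c: "0 \<le> c" "c < 1" using assms(2) unfolding c_def by auto
  define XX where "XX = {x \<in> carrier G. x [^] n = \<one>}"
  have "closedin T {x \<in> carrier G. x [^] n \<in> {\<one>}}"
    by (rule closed_pre[OF cont_pow closed_sing[OF one_closed]])
  then have XXc: "closedin T XX" unfolding XX_def by simp
  have XXm: "measure \<mu> XX > 0" using assms(3) unfolding XX_def .
  obtain N t0 where N: "N \<lhd> G" "openin T N" "t0 \<in> carrier G"
      "measure \<mu> (XX \<inter> (t0 <# N)) > c * measure \<mu> N"
    using stepA[OF c XXc XXm] by blast
  have Nsub: "subgroup N G" using N(1) normal_imp_subgroup by blast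
  have "XX \<inter> (t0 <# N) \<noteq> {}"
  proof
    assume "XX \<inter> (t0 <# N) = {}"
    then have "measure \<mu> (XX \<inter> (t0 <# N)) = 0" by simp
    moreover have "0 \<le> c * measure \<mu> N" using c by simp
    ultimately show False using N(4) by simp
  qed
  then obtain t where tX: "t \<in> XX" "t \<in> t0 <# N" by blast
  have tc: "t \<in> carrier G" and tn: "t [^] n = \<one>" using tX unfolding XX_def by auto
  have tN: "t0 <# N = t <# N" using l_repr_independence[OF tX(2) N(3) Nsub] .
  have big: "measure \<mu> ({x \<in> carrier G. x [^] n = \<one>} \<inter> (t <# N)) > c * measure \<mu> N"
    using N(4) tN unfolding XX_def by simp
  have bound: "\<And>(H::nat monoid) \<phi>. group H \<Longrightarrow> finite (carrier H) \<Longrightarrow> \<phi> \<in> iso H H \<Longrightarrow>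
        (\<forall>x\<in>carrier H. (\<phi> ^^ n) x = x) \<Longrightarrow>
        real (card (X_twisted H \<phi> n)) / real (card (carrier H)) \<noteq> 1 \<Longrightarrow>
        real (card (X_twisted H \<phi> n)) / real (card (carrier H)) \<le> c"
  proof -
    fix H :: "nat monoid" and \<phi>
    assume a: "group H" "finite (carrier H)" "\<phi> \<in> iso H H" "\<forall>x\<in>carrier H. (\<phi> ^^ n) x = x"
      "real (card (X_twisted H \<phi> n)) / real (card (carrier H)) \<noteq> 1"
    have "real (card (X_twisted H \<phi> n)) / real (card (carrier H)) \<le> c_const n"
      by (rule c_bound[OF a])
    then show "real (card (X_twisted H \<phi> n)) / real (card (carrier H)) \<le> c"
      unfolding c_def by simp
  qed
  have key: "\<And>M. M \<lhd> G \<Longrightarrow> openin T M \<Longrightarrow> M \<subseteq> N \<Longrightarrow> \<forall>y\<in>N. (t \<otimes> y) [^] n \<in> M"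
    using stepB[OF tc tn N(1,2) _ _ _ big c(1) bound] by blast
  have ordy: "group.ord G z dvd n" if z: "z \<in> t <# N" for z
  proof -
    obtain y where y: "y \<in> N" "z = t \<otimes> y" using z by (auto simp: l_coset_def)
    have yc: "y \<in> carrier G" using y(1) subgroup.subset[OF Nsub] by blast
    have zc: "z \<in> carrier G" using y tc yc by simp
    have "z [^] n = \<one>"
    proof (rule ccontr)
      assume ne: "z [^] n \<noteq> \<one>"
      obtain M' where M': "M' \<lhd> G" "openin T M'" "z [^] n \<notin> M'"
        using sep_point[OF nat_pow_closed[OF zc] ne] by blast
      have "M' \<inter> N \<lhd> G" using normal_Int2[OF M'(1) N(1)] .
      moreover have "openin T (M' \<inter> N)" using M'(2) N(2) by (rule openin_Int)
      moreover have "M' \<inter> N \<subseteq> N" by blast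
      ultimately have "\<forall>y\<in>N. (t \<otimes> y) [^] n \<in> M' \<inter> N" by (rule key)
      then have "z [^] n \<in> M'" using y by blast
      then show False using M'(3) by simp
    qed
    then show ?thesis using pow_eq_id[OF zc] by simp
  qed
  show ?thesis using Nsub N(2) tc ordy by blast
qed

theorem proposition2p6:
  fixes n :: nat and G :: "('a, 'b) monoid_scheme" and T :: "'a topology" and \<mu> :: "'a measure"
  assumes "n > 0"
    and "c_const n < 1"
    and "profinite_group G T"
    and "haar_measure G T \<mu>"
    and "measure \<mu> {x \<in> carrier G. x [^]\<^bsub>G\<^esub> n = \<one>\<^bsub>G\<^esub>} > 0"
  shows "\<exists>H t. subgroup H G \<and> openin T H \<and> t \<in> carrier G \<and>
           (\<forall>y \<in> t <#\<^bsub>G\<^esub> H. group.ord G y dvd n)"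
proof -
  have grp: "group G" using assms(3) by (simp add: profinite_group_def topological_group_def)
  have "hgrp G T \<mu>"
    unfolding hgrp_def pgrp_def pgrp_axioms_def hgrp_axioms_def using grp assms(3,4) by simp
  then show ?thesis using hgrp.main[of G T \<mu> n] assms(1,2,5) by blast
qed


end
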